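(* Fix a standard Young tableau $T$ of shape $\lambda\vdash k$. For $n\ge 1$ let $N(n;T)$ be the number of standard Young tableaux with $n$ cells that contain $T$ as a subtableau, and let $t_n$ be the number of all standard Young tableaux with $n$ cells (of any shape). Then \[\lim_{n\to\infty}\frac{N(n;T)}{t_n}=\frac{f^{\lambda}}{k!},\] where $f^\lambda$ is the number of standard Young tableaux of shape $\lambda$.
   Context: A standard Young tableau with $n$ cells is a Ferrers diagram of some partition of $n$ filled bijectively with $1,2,\dots,n$ so that entries increase along rows and down columns. For a standard Young tableau $U$ with $n$ cells and $k\le n$, the subtableau of $U$ in the letters $1,\dots,k$ is the tableau formed by the cells of $U$ containing $1,2,\dots,k$ (with those entries); $U$ contains $T$ as a subtableau if $T$ equals the subtableau of $U$ in the letters $1,\dots,|T|$. *)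

theory Defs
  imports "HOL-Analysis.Analysis"
begin

text \<open>Cells are pairs (row, column), 0-indexed.  A tableau is a partial map
from cells to entries; its domain is its set of cells (its diagram).\<close>

type_synonym tableau = "nat \<times> nat \<Rightarrow> nat option"

definition ferrers :: "(nat \<times> nat) set \<Rightarrow> bool" where
  "ferrers D \<longleftrightarrow> finite D \<and>
     (\<forall>i j i' j'. (i, j) \<in> D \<longrightarrow> i' \<le> i \<longrightarrow> j' \<le> j \<longrightarrow> (i', j') \<in> D)"

definition is_syt :: "nat \<Rightarrow> tableau \<Rightarrow> bool" where
  "is_syt n T \<longleftrightarrow> ferrers (dom T) \<and> card (dom T) = n \<and>
     bij_betw (\<lambda>c. the (T c)) (dom T) {1..n} \<and>
     (\<forall>i j. (i, Suc j) \<in> dom T \<longrightarrow> the (T (i, j)) < the (T (i, Suc j))) \<and>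
     (\<forall>i j. (Suc i, j) \<in> dom T \<longrightarrow> the (T (i, j)) < the (T (Suc i, j)))"

definition syt_set :: "nat \<Rightarrow> tableau set" where
  "syt_set n = {T. is_syt n T}"

definition syt_shape :: "(nat \<times> nat) set \<Rightarrow> tableau set" where
  "syt_shape D = {T. is_syt (card D) T \<and> dom T = D}"

definition subtab :: "nat \<Rightarrow> tableau \<Rightarrow> tableau" where
  "subtab k U = (\<lambda>c. case U c of None \<Rightarrow> None | Some v \<Rightarrow> if v \<le> k then Some v else None)"

definition contains :: "tableau \<Rightarrow> tableau \<Rightarrow> bool" where
  "contains U T \<longleftrightarrow> card (dom T) \<le> card (dom U) \<and> subtab (card (dom T)) U = T"

definition N_count :: "nat \<Rightarrow> tableau \<Rightarrow> nat" where
  "N_count n T = card {U \<in> syt_set n. contains U T}"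

end

theory Submission
  imports Defs "HOL-Real_Asymp.Real_Asymp"
begin

definition addc :: "(nat \<times> nat) set \<Rightarrow> (nat \<times> nat) set" where
  "addc D = {c. c \<notin> D \<and> ferrers (insert c D)}"

definition remc :: "(nat \<times> nat) set \<Rightarrow> (nat \<times> nat) set" where
  "remc D = {c. c \<in> D \<and> ferrers (D - {c})}"

lemma ferrers_Int: "ferrers A \<Longrightarrow> ferrers B \<Longrightarrow> ferrers (A \<inter> B)"
  unfolding ferrers_def by blast

lemma ferrers_Un: "ferrers A \<Longrightarrow> ferrers B \<Longrightarrow> ferrers (A \<union> B)"
  unfolding ferrers_def by blast

lemma ferrers_finite: "ferrers A \<Longrightarrow> finite A"
  unfolding ferrers_def by blast

lemma ferrers_down: "ferrers A \<Longrightarrow> (i,j) \<in> A \<Longrightarrow> i' \<le> i \<Longrightarrow> j' \<le> j \<Longrightarrow> (i',j') \<in> A"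
  unfolding ferrers_def by blast

definition rl :: "(nat \<times> nat) set \<Rightarrow> nat \<Rightarrow> nat" where
  "rl D i = card {j. (i,j) \<in> D}"

lemma down_closed_nat:
  fixes S :: "nat set"
  assumes "finite S" "\<And>j j'. j \<in> S \<Longrightarrow> j' \<le> j \<Longrightarrow> j' \<in> S"
  shows "S = {..<card S}"
proof (cases "S = {}")
  case True then show ?thesis by simp
next
  case False
  define m where "m = Max S"
  have "m \<in> S" using False assms(1) m_def by simp
  have e: "S = {..m}"
  proof
    show "S \<subseteq> {..m}" using Max_ge[OF assms(1)] m_def by auto
    show "{..m} \<subseteq> S" using assms(2)[OF \<open>m \<in> S\<close>] by auto
  qed
  have "card S = Suc m" unfolding e by simp
  then show ?thesis using e by (simp add: lessThan_Suc_atMost)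
qed

lemma rl_mem: assumes "ferrers D" shows "(i,j) \<in> D \<longleftrightarrow> j < rl D i"
proof -
  have fin: "finite {j. (i,j) \<in> D}"
  proof (rule finite_subset)
    show "{j. (i,j) \<in> D} \<subseteq> snd ` D" by force
    show "finite (snd ` D)" using ferrers_finite[OF assms] by simp
  qed
  have "{j. (i,j) \<in> D} = {..<rl D i}" unfolding rl_def
  proof (rule down_closed_nat[OF fin])
    fix j j' assume "j \<in> {j. (i, j) \<in> D}" "j' \<le> j"
    then show "j' \<in> {j. (i, j) \<in> D}" using ferrers_down[OF assms, of i j i j'] by simp
  qed
  then show ?thesis by (simp add: set_eq_iff)
qed

lemma rl_mono: assumes "ferrers D" "i \<le> i'" shows "rl D i' \<le> rl D i"
proof -
  have "\<forall>j. j < rl D i' \<longrightarrow> j < rl D i"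
  proof (intro allI impI)
    fix j assume that: "j < rl D i'" 
    have "(i',j) \<in> D" using that rl_mem[OF assms(1), of i' j] by simp
    then have "(i,j) \<in> D" using ferrers_down[OF assms(1), of i' j i j] assms(2) by simp
    then show "j < rl D i" using rl_mem[OF assms(1), of i j] by simp
  qed
  then show ?thesis
  proof (rule contrapos_pp)
    assume "\<not> rl D i' \<le> rl D i"
    then show "\<not> (\<forall>j. j < rl D i' \<longrightarrow> j < rl D i)" using not_less by blast
  qed
qed

lemma addc_char:
  assumes "ferrers D"
  shows "(i,j) \<in> addc D \<longleftrightarrow> j = rl D i \<and> (i > 0 \<longrightarrow> rl D i < rl D (i - 1))"
proof
  assume a: "(i,j) \<in> addc D"
  then have nd: "(i,j) \<notin> D" and f: "ferrers (insert (i,j) D)" by (auto simp: addc_def)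
  have "\<not> j < rl D i" using nd rl_mem[OF assms, of i j] by simp
  then have "j \<ge> rl D i" by simp
  moreover have "j \<le> rl D i"
  proof (cases j)
    case (Suc j')
    then have "(i,j') \<in> insert (i,j) D" using ferrers_down[OF f, of i j i j'] by auto
    then have "(i,j') \<in> D" using Suc by auto
    then show ?thesis using Suc rl_mem[OF assms, of i j'] by simp
  qed simp
  moreover have "rl D i < rl D (i - 1)" if "i > 0"
  proof -
    have "(i - 1, j) \<in> insert (i,j) D" using ferrers_down[OF f, of i j "i-1" j] by auto
    then have "(i-1,j) \<in> D" using that by auto
    then have "j < rl D (i - 1)" using rl_mem[OF assms, of "i-1" j] by simp
    then show ?thesis using \<open>j \<ge> rl D i\<close> by simp
  qed
  ultimately show "j = rl D i \<and> (i > 0 \<longrightarrow> rl D i < rl D (i - 1))" by simp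
next
  assume a: "j = rl D i \<and> (i > 0 \<longrightarrow> rl D i < rl D (i - 1))"
  have nd: "(i,j) \<notin> D" using a rl_mem[OF assms, of i j] by simp
  have "ferrers (insert (i,j) D)" unfolding ferrers_def
  proof (intro conjI allI impI)
    show "finite (insert (i, j) D)" using ferrers_finite[OF assms] by simp
  next
    fix a b a' b' assume m: "(a,b) \<in> insert (i,j) D" "a' \<le> a" "b' \<le> b"
    show "(a',b') \<in> insert (i,j) D"
    proof (cases "(a,b) = (i,j)")
      case False then have "(a,b) \<in> D" using m by auto
        then show ?thesis using m ferrers_down[OF assms, of a b a' b'] by simp
    next
      case True
      then have ab: "a = i" "b = j" by auto
      show ?thesis
      proof (cases "a' = i \<and> b' = j")
        case True then show ?thesis by simp
      next
        case False
        then have "a' < i \<or> b' < j" using m ab by auto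
        then show ?thesis
        proof
          assume "a' < i"
          then have "b' < rl D (i - 1)" using a m ab by simp
          then have "(i-1, b') \<in> D" using rl_mem[OF assms, of "i-1" b'] by simp
          then have "(a', b') \<in> D" using ferrers_down[OF assms, of "i-1" b' a' b'] \<open>a' < i\<close> by simp
          then show ?thesis by simp
        next
          assume "b' < j"
          then have "(i, b') \<in> D" using a rl_mem[OF assms, of i b'] by simp
          then have "(a', b') \<in> D" using ferrers_down[OF assms, of i b' a' b'] m ab by simp
          then show ?thesis by simp
        qed
      qed
    qed
  qed
  then show "(i,j) \<in> addc D" using nd by (simp add: addc_def)
qed

lemma remc_char:
  assumes "ferrers D"
  shows "(i,j) \<in> remc D \<longleftrightarrow> Suc j = rl D i \<and> rl D (Suc i) < rl D i"
proof
  assume a: "(i,j) \<in> remc D"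
  then have d: "(i,j) \<in> D" and f: "ferrers (D - {(i,j)})" by (auto simp: remc_def)
  have "(i, Suc j) \<notin> D"
    using ferrers_down[OF f, of i "Suc j" i j] by auto
  moreover have "(Suc i, j) \<notin> D"
    using ferrers_down[OF f, of "Suc i" j i j] by auto
  ultimately show "Suc j = rl D i \<and> rl D (Suc i) < rl D i"
  proof -
    have "j < rl D i" using d rl_mem[OF assms, of i j] by simp
    moreover have "\<not> Suc j < rl D i" using \<open>(i, Suc j) \<notin> D\<close> rl_mem[OF assms, of i "Suc j"] by simp
    moreover have "\<not> j < rl D (Suc i)" using \<open>(Suc i, j) \<notin> D\<close> rl_mem[OF assms, of "Suc i" j] by simp
    ultimately show ?thesis by linarith
  qed
next
  assume a: "Suc j = rl D i \<and> rl D (Suc i) < rl D i"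
  have d: "(i,j) \<in> D" using a rl_mem[OF assms, of i j] by linarith
  have n1: "(i, Suc j) \<notin> D" using a rl_mem[OF assms, of i "Suc j"] by linarith
  have n2: "(Suc i, j) \<notin> D" using a rl_mem[OF assms, of "Suc i" j] by linarith
  have "ferrers (D - {(i,j)})" unfolding ferrers_def
  proof (intro conjI allI impI)
    show "finite (D - {(i,j)})" using ferrers_finite[OF assms] by simp
  next
    fix a b a' b' assume m: "(a,b) \<in> D - {(i,j)}" "a' \<le> a" "b' \<le> b"
    have "(a',b') \<in> D" using m ferrers_down[OF assms, of a b a' b'] by simp
    moreover have "(a',b') \<noteq> (i,j)"
    proof
      assume e: "(a',b') = (i,j)"
      have "a > i \<or> b > j" using m e by auto
      then show False
      proof
        assume "a > i" then have "(Suc i, j) \<in> D" using ferrers_down[OF assms, of a b "Suc i" j] m e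
          by auto
        then show False using n2 by simp
      next
        assume "b > j" then have "(i, Suc j) \<in> D" using ferrers_down[OF assms, of a b i "Suc j"] m e
          by auto
        then show False using n1 by simp
      qed
    qed
    ultimately show "(a',b') \<in> D - {(i,j)}" by simp
  qed
  then show "(i,j) \<in> remc D" using d by (simp add: remc_def)
qed


lemma remc_eq: assumes "ferrers D"
  shows "remc D = (\<lambda>i. (i, rl D i - 1)) ` {i. rl D (Suc i) < rl D i}"
proof (rule set_eqI)
  fix c :: "nat \<times> nat"
  obtain i j where c: "c = (i,j)" by (cases c)
  show "c \<in> remc D \<longleftrightarrow> c \<in> (\<lambda>i. (i, rl D i - 1)) ` {i. rl D (Suc i) < rl D i}"
    unfolding c remc_char[OF assms] by auto
qed

lemma addc_eq: assumes "ferrers D"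
  shows "addc D = (\<lambda>i. (i, rl D i)) ` insert 0 (Suc ` {i. rl D (Suc i) < rl D i})"
proof (rule set_eqI)
  fix c :: "nat \<times> nat"
  obtain i j where c: "c = (i,j)" by (cases c)
  have "i = 0 \<or> (0 < i \<and> rl D i < rl D (i - 1)) \<longleftrightarrow> i \<in> insert 0 (Suc ` {i. rl D (Suc i) < rl D i})"
    by (cases i) auto
  then show "c \<in> addc D \<longleftrightarrow> c \<in> (\<lambda>i. (i, rl D i)) ` insert 0 (Suc ` {i. rl D (Suc i) < rl D i})"
    unfolding c addc_char[OF assms] by auto
qed

lemma finite_R: assumes "ferrers D" shows "finite {i. rl D (Suc i) < rl D i}"
proof (rule finite_subset)
  show "{i. rl D (Suc i) < rl D i} \<subseteq> fst ` D"
  proof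
    fix i assume "i \<in> {i. rl D (Suc i) < rl D i}"
    then have "0 < rl D i" by simp
    then have "(i,0) \<in> D" using rl_mem[OF assms, of i 0] by simp
    then show "i \<in> fst ` D" by force
  qed
  show "finite (fst ` D)" using ferrers_finite[OF assms] by simp
qed

lemma finite_addc: assumes "ferrers D" shows "finite (addc D)"
  unfolding addc_eq[OF assms] using finite_R[OF assms] by simp

lemma finite_remc: assumes "ferrers D" shows "finite (remc D)"
  unfolding remc_eq[OF assms] using finite_R[OF assms] by simp

lemma card_addc: assumes "ferrers D" shows "card (addc D) = Suc (card (remc D))"
proof -
  let ?R = "{i. rl D (Suc i) < rl D i}"
  have i1: "inj (\<lambda>i. (i, rl D i))" by (auto intro: injI)
  have i2: "inj (\<lambda>i. (i, rl D i - 1))" by (auto intro: injI)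
  have "card (addc D) = card (insert 0 (Suc ` ?R))"
    unfolding addc_eq[OF assms] by (rule card_image) (rule inj_on_subset[OF i1], simp)
  also have "\<dots> = Suc (card (Suc ` ?R))"
    using finite_R[OF assms] by (subst card_insert_disjoint) auto
  also have "card (Suc ` ?R) = card ?R" by (rule card_image) simp
  also have "card ?R = card (remc D)"
    unfolding remc_eq[OF assms] by (rule card_image[symmetric]) (rule inj_on_subset[OF i2], simp)
  finally show ?thesis .
qed

lemma ferrers_insert_rem: "ferrers D \<Longrightarrow> c \<in> addc D \<Longrightarrow> c \<in> remc (insert c D)"
  unfolding addc_def remc_def by simp

lemma addc_rem: "ferrers D \<Longrightarrow> c \<in> remc D \<Longrightarrow> c \<in> addc (D - {c})"
  unfolding addc_def remc_def by (simp add: insert_absorb)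

lemma addc_ferrers: "c \<in> addc D \<Longrightarrow> ferrers (insert c D)"
  unfolding addc_def by simp

lemma remc_ferrers: "c \<in> remc D \<Longrightarrow> ferrers (D - {c})"
  unfolding remc_def by simp

lemma addc_notin: "c \<in> addc D \<Longrightarrow> c \<notin> D"
  unfolding addc_def by simp

lemma remc_in: "c \<in> remc D \<Longrightarrow> c \<in> D"
  unfolding remc_def by simp

text \<open>The commutation relation DU = UD + I, tested against an arbitrary function.\<close>
lemma commute:
  fixes f :: "(nat \<times> nat) set \<Rightarrow> nat"
  assumes D: "ferrers D"
  shows "(\<Sum>c\<in>addc D. \<Sum>d\<in>remc (insert c D). f (insert c D - {d}))
       = f D + (\<Sum>d\<in>remc D. \<Sum>c\<in>addc (D - {d}). f (insert c (D - {d})))"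
proof -
  let ?P1 = "{(c,d). c \<in> addc D \<and> d \<in> remc (insert c D) \<and> d \<noteq> c}"
  let ?P2 = "{(c,d). d \<in> remc D \<and> c \<in> addc (D - {d}) \<and> c \<noteq> d}"
  have eqP: "?P1 = ?P2"
  proof (rule set_eqI, rule iffI)
    fix x assume "x \<in> ?P1"
    then obtain c d where x: "x = (c,d)" and c: "c \<in> addc D" and d: "d \<in> remc (insert c D)" and cd: "d \<noteq> c"
      by blast
    have cD: "c \<notin> D" using addc_notin[OF c] .
    have dD: "d \<in> D" using remc_in[OF d] cd by simp
    have "D - {d} = (insert c D - {d}) \<inter> D" using cD by auto
    then have f1: "ferrers (D - {d})" using ferrers_Int[OF remc_ferrers[OF d] D] by simp
    have dr: "d \<in> remc D" using dD f1 by (simp add: remc_def)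
    have "insert c (D - {d}) = insert c D - {d}" using cd by auto
    then have "c \<in> addc (D - {d})" using remc_ferrers[OF d] cD by (simp add: addc_def)
    then show "x \<in> ?P2" using x dr cd by simp
  next
    fix x assume "x \<in> ?P2"
    then obtain c d where x: "x = (c,d)" and d: "d \<in> remc D" and c: "c \<in> addc (D - {d})" and cd: "c \<noteq> d"
      by blast
    have cD: "c \<notin> D" using addc_notin[OF c] cd by simp
    have dD: "d \<in> D" using remc_in[OF d] .
    have "insert c D = insert c (D - {d}) \<union> D" by auto
    then have f1: "ferrers (insert c D)" using ferrers_Un[OF addc_ferrers[OF c] D] by simp
    have ca: "c \<in> addc D" using cD f1 by (simp add: addc_def)
    have "insert c (D - {d}) = insert c D - {d}" using cd by auto
    then have "d \<in> remc (insert c D)" using addc_ferrers[OF c] dD by (simp add: remc_def)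
    then show "x \<in> ?P1" using x ca cd by simp
  qed
  have finA: "finite (addc D)" using finite_addc[OF D] .
  have finR: "finite (remc D)" using finite_remc[OF D] .
  have finP1: "finite ?P1"
  proof (rule finite_subset)
    show "?P1 \<subseteq> Sigma (addc D) (\<lambda>c. remc (insert c D))" by auto
    show "finite (Sigma (addc D) (\<lambda>c. remc (insert c D)))"
      using finA by (auto intro!: finite_SigmaI finite_remc addc_ferrers)
  qed
  have "(\<Sum>c\<in>addc D. \<Sum>d\<in>remc (insert c D). f (insert c D - {d}))
      = (\<Sum>c\<in>addc D. f D + (\<Sum>d\<in>remc (insert c D) - {c}. f (insert c D - {d})))"
  proof (rule sum.cong[OF refl])
    fix c assume c: "c \<in> addc D"
    have fin: "finite (remc (insert c D))" using finite_remc[OF addc_ferrers[OF c]] .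
    have cin: "c \<in> remc (insert c D)" using ferrers_insert_rem[OF D c] .
    have "insert c D - {c} = D" using addc_notin[OF c] by auto
    then show "(\<Sum>d\<in>remc (insert c D). f (insert c D - {d})) = f D + (\<Sum>d\<in>remc (insert c D) - {c}. f (insert c D - {d}))"
      using sum.remove[OF fin cin, of "\<lambda>d. f (insert c D - {d})"] by simp
  qed
  also have "\<dots> = card (addc D) * f D + (\<Sum>c\<in>addc D. \<Sum>d\<in>remc (insert c D) - {c}. f (insert c D - {d}))"
    by (simp add: sum.distrib)
  also have "(\<Sum>c\<in>addc D. \<Sum>d\<in>remc (insert c D) - {c}. f (insert c D - {d})) = (\<Sum>(c,d)\<in>?P1. f (insert c D - {d}))"
  proof -
    have "?P1 = Sigma (addc D) (\<lambda>c. remc (insert c D) - {c})" by auto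
    then show ?thesis
      using finA by (simp add: sum.Sigma finite_remc addc_ferrers)
  qed
  also have "\<dots> = (\<Sum>(c,d)\<in>?P2. f (insert c (D - {d})))"
    unfolding eqP
  proof (rule sum.cong[OF refl])
    fix x assume "x \<in> ?P2"
    then obtain c d where x: "x = (c,d)" and cd: "c \<noteq> d" by blast
    have "insert c D - {d} = insert c (D - {d})" using cd by auto
    then show "(case x of (c, d) \<Rightarrow> f (insert c D - {d})) = (case x of (c, d) \<Rightarrow> f (insert c (D - {d})))"
      using x by simp
  qed
  also have "\<dots> = (\<Sum>d\<in>remc D. \<Sum>c\<in>addc (D - {d}) - {d}. f (insert c (D - {d})))"
  proof -
    have "(\<Sum>d\<in>remc D. \<Sum>c\<in>addc (D - {d}) - {d}. f (insert c (D - {d})))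
        = (\<Sum>(d,c)\<in>Sigma (remc D) (\<lambda>d. addc (D - {d}) - {d}). f (insert c (D - {d})))"
      using finR by (simp add: sum.Sigma finite_addc remc_ferrers)
    also have "\<dots> = (\<Sum>(c,d)\<in>?P2. f (insert c (D - {d})))"
    proof -
      let ?S = "Sigma (remc D) (\<lambda>d. addc (D - {d}) - {d})"
      let ?sw = "\<lambda>x::(nat\<times>nat)\<times>(nat\<times>nat). (snd x, fst x)"
      have e: "?P2 = ?sw ` ?S" by force
      have inj: "inj_on ?sw ?S" by (auto intro: inj_onI)
      have "(\<Sum>(c,d)\<in>?P2. f (insert c (D - {d}))) = (\<Sum>x\<in>?sw ` ?S. f (insert (fst x) (D - {snd x})))"
        unfolding e by (simp add: case_prod_beta)
      also have "\<dots> = (\<Sum>x\<in>?S. f (insert (snd x) (D - {fst x})))"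
        by (subst sum.reindex[OF inj]) (simp add: comp_def)
      also have "\<dots> = (\<Sum>(d,c)\<in>?S. f (insert c (D - {d})))"
        by (simp add: case_prod_beta)
      finally show ?thesis by simp
    qed
    finally show ?thesis by simp
  qed
  finally have L: "(\<Sum>c\<in>addc D. \<Sum>d\<in>remc (insert c D). f (insert c D - {d}))
     = card (addc D) * f D + (\<Sum>d\<in>remc D. \<Sum>c\<in>addc (D - {d}) - {d}. f (insert c (D - {d})))" .
  have R: "(\<Sum>d\<in>remc D. \<Sum>c\<in>addc (D - {d}). f (insert c (D - {d})))
     = card (remc D) * f D + (\<Sum>d\<in>remc D. \<Sum>c\<in>addc (D - {d}) - {d}. f (insert c (D - {d})))"
  proof -
    have "(\<Sum>d\<in>remc D. \<Sum>c\<in>addc (D - {d}). f (insert c (D - {d})))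
       = (\<Sum>d\<in>remc D. f D + (\<Sum>c\<in>addc (D - {d}) - {d}. f (insert c (D - {d}))))"
    proof (rule sum.cong[OF refl])
      fix d assume d: "d \<in> remc D"
      have fin: "finite (addc (D - {d}))" using finite_addc[OF remc_ferrers[OF d]] .
      have din: "d \<in> addc (D - {d})" using addc_rem[OF D d] .
      have "insert d (D - {d}) = D" using remc_in[OF d] by auto
      then show "(\<Sum>c\<in>addc (D - {d}). f (insert c (D - {d}))) = f D + (\<Sum>c\<in>addc (D - {d}) - {d}. f (insert c (D - {d})))"
        using sum.remove[OF fin din, of "\<lambda>c. f (insert c (D - {d}))"] by simp
    qed
    also have "\<dots> = card (remc D) * f D + (\<Sum>d\<in>remc D. \<Sum>c\<in>addc (D - {d}) - {d}. f (insert c (D - {d})))"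
      by (simp add: sum.distrib)
    finally show ?thesis .
  qed
  show ?thesis unfolding L R card_addc[OF D] by simp
qed


fun W :: "nat \<Rightarrow> (nat \<times> nat) set \<Rightarrow> nat" where
  "W 0 D = 1"
| "W (Suc j) D = (\<Sum>c\<in>remc D. W j (D - {c}))"

fun Z :: "nat \<Rightarrow> (nat \<times> nat) set \<Rightarrow> nat" where
  "Z 0 D = 1"
| "Z (Suc L) D = (\<Sum>c\<in>addc D. Z L (insert c D))"

fun tt :: "nat \<Rightarrow> nat" where
  "tt 0 = 1"
| "tt (Suc 0) = 1"
| "tt (Suc (Suc n)) = tt (Suc n) + Suc n * tt n"

lemma tt_rec: "tt (Suc n) = tt n + n * tt (n - 1)"
  by (cases n) auto

definition B :: "nat \<Rightarrow> nat \<Rightarrow> nat" where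
  "B L j = (L choose j) * tt (L - j)"

lemma choose_shift: "(n - k) * (n choose k) = Suc k * (n choose Suc k)"
proof (cases n)
  case 0 then show ?thesis by simp
next
  case (Suc m)
  have "(n - k) * (n choose k) = n * (m choose k)" using binomial_absorb_comp[of n k] Suc by simp
  also have "\<dots> = Suc k * (n choose Suc k)" using Suc_times_binomial[of k m] Suc by simp
  finally show ?thesis .
qed

lemma B_rec: "B (Suc L) i = B L i + (if i = 0 then 0 else B L (i - 1)) + Suc i * B L (Suc i)"
proof (cases i)
  case 0
  then show ?thesis unfolding B_def using tt_rec[of L] by simp
next
  case (Suc k)
  show ?thesis
  proof (cases "L \<le> k")
    case True
    then show ?thesis unfolding B_def Suc by simp
  next
    case False
    define m where "m = L - Suc k"
    have Lk: "L - k = Suc m" using False m_def by simp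
    have e1: "tt (L - k) = tt m + m * tt (m - 1)" using Lk tt_rec[of m] by simp
    have e2: "L - Suc (Suc k) = m - 1" using m_def by simp
    have e3: "m * (L choose Suc k) = Suc (Suc k) * (L choose Suc (Suc k))"
      using choose_shift[of L "Suc k"] m_def by simp
    have "B (Suc L) i = (L choose Suc k) * tt (L - k) + (L choose k) * tt (L - k)"
      unfolding B_def Suc by (simp add: algebra_simps)
    also have "\<dots> = (L choose Suc k) * tt m + (L choose k) * tt (L - k) + (m * (L choose Suc k)) * tt (m - 1)"
      unfolding e1 by (simp add: algebra_simps)
    also have "\<dots> = B L i + B L (i - 1) + Suc i * B L (Suc i)"
      unfolding B_def Suc e3 e2 using m_def by (simp add: algebra_simps)
    finally show ?thesis using Suc by simp
  qed
qed

lemma B_zero: "L < j \<Longrightarrow> B L j = 0"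
  unfolding B_def by simp

lemma sum_shift_lemma:
  fixes w :: "nat \<Rightarrow> nat"
  shows "(\<Sum>j\<le>L. B L j * (w j + w (Suc j) + j * w (j - 1))) = (\<Sum>j\<le>Suc L. B (Suc L) j * w j)"
proof -
  have s1: "(\<Sum>j\<le>Suc L. B L j * w j) = (\<Sum>j\<le>L. B L j * w j)"
    by (simp add: B_zero)
  have s2: "(\<Sum>j\<le>Suc L. (if j = 0 then 0 else B L (j - 1)) * w j) = (\<Sum>j\<le>L. B L j * w (Suc j))"
    by (subst sum.atMost_Suc_shift) simp
  have s3: "(\<Sum>j\<le>Suc L. Suc j * B L (Suc j) * w j) = (\<Sum>j\<le>L. j * B L j * w (j - 1))"
  proof -
    have "(\<Sum>j\<le>Suc L. Suc j * B L (Suc j) * w j) = (\<Sum>j\<le>L. Suc j * B L (Suc j) * w j)"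
      by (simp add: B_zero)
    also have "\<dots> = (\<Sum>j\<le>Suc L. j * B L j * w (j - 1))"
      by (subst sum.atMost_Suc_shift) simp
    also have "\<dots> = (\<Sum>j\<le>L. j * B L j * w (j - 1))"
      by (simp add: B_zero)
    finally show ?thesis .
  qed
  have "(\<Sum>j\<le>Suc L. B (Suc L) j * w j)
     = (\<Sum>j\<le>Suc L. B L j * w j) + (\<Sum>j\<le>Suc L. (if j = 0 then 0 else B L (j - 1)) * w j)
       + (\<Sum>j\<le>Suc L. Suc j * B L (Suc j) * w j)"
    unfolding B_rec by (simp add: sum.distrib algebra_simps)
  also have "\<dots> = (\<Sum>j\<le>L. B L j * w j) + (\<Sum>j\<le>L. B L j * w (Suc j)) + (\<Sum>j\<le>L. j * B L j * w (j - 1))"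
    unfolding s1 s2 s3 ..
  also have "\<dots> = (\<Sum>j\<le>L. B L j * (w j + w (Suc j) + j * w (j - 1)))"
    by (simp add: sum.distrib algebra_simps)
  finally show ?thesis by simp
qed

lemma V_lemma:
  assumes "ferrers D"
  shows "(\<Sum>c\<in>addc D. W j (insert c D)) = W j D + W (Suc j) D + j * W (j - 1) D"
  using assms
proof (induction j arbitrary: D)
  case 0
  then show ?case using card_addc[OF 0] by simp
next
  case (Suc j)
  note D = Suc.prems
  have "(\<Sum>c\<in>addc D. W (Suc j) (insert c D))
      = (\<Sum>c\<in>addc D. \<Sum>d\<in>remc (insert c D). W j (insert c D - {d}))" by simp
  also have "\<dots> = W j D + (\<Sum>d\<in>remc D. \<Sum>c\<in>addc (D - {d}). W j (insert c (D - {d})))"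
    by (rule commute[OF D])
  also have "(\<Sum>d\<in>remc D. \<Sum>c\<in>addc (D - {d}). W j (insert c (D - {d})))
     = (\<Sum>d\<in>remc D. W j (D - {d}) + W (Suc j) (D - {d}) + j * W (j - 1) (D - {d}))"
    by (rule sum.cong[OF refl]) (rule Suc.IH[OF remc_ferrers])
  also have "\<dots> = W (Suc j) D + W (Suc (Suc j)) D + j * (\<Sum>d\<in>remc D. W (j - 1) (D - {d}))"
    by (simp add: sum.distrib sum_distrib_left)
  also have "j * (\<Sum>d\<in>remc D. W (j - 1) (D - {d})) = j * W j D"
    by (cases j) simp_all
  finally show ?case by simp
qed

lemma Z_formula:
  assumes "ferrers D"
  shows "Z L D = (\<Sum>j\<le>L. B L j * W j D)"
  using assms
proof (induction L arbitrary: D)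
  case 0
  then show ?case by (simp add: B_def)
next
  case (Suc L)
  note D = Suc.prems
  have "Z (Suc L) D = (\<Sum>c\<in>addc D. \<Sum>j\<le>L. B L j * W j (insert c D))"
    using Suc.IH[OF addc_ferrers] by simp
  also have "\<dots> = (\<Sum>j\<le>L. B L j * (\<Sum>c\<in>addc D. W j (insert c D)))"
    by (simp add: sum.swap[of _ "addc D"] sum_distrib_left)
  also have "\<dots> = (\<Sum>j\<le>L. B L j * (W j D + W (Suc j) D + j * W (j - 1) D))"
    using V_lemma[OF D] by simp
  also have "\<dots> = (\<Sum>j\<le>Suc L. B (Suc L) j * W j D)"
    by (rule sum_shift_lemma)
  finally show ?case .
qed

lemma W_big: "finite D \<Longrightarrow> card D < j \<Longrightarrow> W j D = 0"
proof (induction j arbitrary: D)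
  case 0 then show ?case by simp
next
  case (Suc j)
  have "W j (D - {c}) = 0" if "c \<in> remc D" for c
  proof -
    have "c \<in> D" using that remc_in by blast
    then have "card (D - {c}) = card D - 1" using Suc.prems by simp
    moreover have "card D > 0" using \<open>c \<in> D\<close> Suc.prems(1) card_gt_0_iff by blast
    ultimately have "card (D - {c}) < j" using Suc.prems(2) by simp
    then show ?thesis using Suc.IH[of "D - {c}"] Suc.prems(1) by simp
  qed
  then show ?case by simp
qed

lemma Z_empty: "Z n {} = tt n"
proof -
  have f: "ferrers {}" unfolding ferrers_def by simp
  have "Z n {} = (\<Sum>j\<le>n. B n j * W j {})" by (rule Z_formula[OF f])
  also have "\<dots> = (\<Sum>j\<in>{0}. B n j * W j {})"
    by (rule sum.mono_neutral_right) (auto simp: W_big)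
  finally show ?thesis by (simp add: B_def)
qed


lemma syt_ferrers: "is_syt n U \<Longrightarrow> ferrers (dom U)"
  unfolding is_syt_def by blast
lemma syt_card: "is_syt n U \<Longrightarrow> card (dom U) = n"
  unfolding is_syt_def by blast
lemma syt_bij: "is_syt n U \<Longrightarrow> bij_betw (\<lambda>c. the (U c)) (dom U) {1..n}"
  unfolding is_syt_def by blast
lemma syt_row: "is_syt n U \<Longrightarrow> (i, Suc j) \<in> dom U \<Longrightarrow> the (U (i, j)) < the (U (i, Suc j))"
  unfolding is_syt_def by blast
lemma syt_col: "is_syt n U \<Longrightarrow> (Suc i, j) \<in> dom U \<Longrightarrow> the (U (i, j)) < the (U (Suc i, j))"
  unfolding is_syt_def by blast

lemma syt_val: assumes "is_syt n U" "U c = Some v" shows "1 \<le> v \<and> v \<le> n"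
proof -
  have "c \<in> dom U" using assms(2) by blast
  then have "the (U c) \<in> {1..n}" using syt_bij[OF assms(1)] bij_betwE by blast
  then show ?thesis using assms(2) by simp
qed

lemma syt_inj: assumes "is_syt n U" "U c = Some v" "U c' = Some v" shows "c = c'"
proof -
  have "inj_on (\<lambda>c. the (U c)) (dom U)" using syt_bij[OF assms(1)] bij_betw_imp_inj_on by blast
  moreover have "c \<in> dom U" "c' \<in> dom U" using assms(2,3) by blast+
  ultimately show ?thesis using assms(2,3) inj_onD[of "\<lambda>c. the (U c)" "dom U" c c'] by simp
qed

lemma syt_surj: assumes "is_syt n U" "1 \<le> v" "v \<le> n" obtains c where "U c = Some v"
proof -
  have "v \<in> (\<lambda>c. the (U c)) ` dom U" using syt_bij[OF assms(1)] assms(2,3)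
    by (simp add: bij_betw_def)
  then obtain c where "c \<in> dom U" "v = the (U c)" by blast
  then have "U c = Some v" by auto
  then show ?thesis using that by blast
qed

lemma syt_row_mono: assumes "is_syt n U" "(i, j) \<in> dom U" "j' \<le> j"
  shows "the (U (i, j')) \<le> the (U (i, j))"
  using assms(2,3)
proof (induction j)
  case 0 then show ?case by simp
next
  case (Suc j)
  show ?case
  proof (cases "j' = Suc j")
    case True then show ?thesis by simp
  next
    case False
    then have "j' \<le> j" using Suc.prems by simp
    moreover have "(i, j) \<in> dom U"
      using ferrers_down[OF syt_ferrers[OF assms(1)], of i "Suc j" i j] Suc.prems by simp
    ultimately have "the (U (i, j')) \<le> the (U (i, j))" using Suc.IH by simp
    also have "\<dots> < the (U (i, Suc j))" using syt_row[OF assms(1) Suc.prems(1)] .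
    finally show ?thesis by simp
  qed
qed

lemma syt_col_mono: assumes "is_syt n U" "(i, j) \<in> dom U" "i' \<le> i"
  shows "the (U (i', j)) \<le> the (U (i, j))"
  using assms(2,3)
proof (induction i)
  case 0 then show ?case by simp
next
  case (Suc i)
  show ?case
  proof (cases "i' = Suc i")
    case True then show ?thesis by simp
  next
    case False
    then have "i' \<le> i" using Suc.prems by simp
    moreover have "(i, j) \<in> dom U"
      using ferrers_down[OF syt_ferrers[OF assms(1)], of "Suc i" j i j] Suc.prems by simp
    ultimately have "the (U (i', j)) \<le> the (U (i, j))" using Suc.IH by simp
    also have "\<dots> < the (U (Suc i, j))" using syt_col[OF assms(1) Suc.prems(1)] .
    finally show ?thesis by simp
  qed
qed

lemma syt_mono: assumes "is_syt n U" "(i, j) \<in> dom U" "i' \<le> i" "j' \<le> j"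
  shows "the (U (i', j')) \<le> the (U (i, j))"
proof -
  have "(i', j) \<in> dom U" using ferrers_down[OF syt_ferrers[OF assms(1)], of i j i' j] assms by simp
  then have "the (U (i', j')) \<le> the (U (i', j))" using syt_row_mono[OF assms(1)] assms(4) by simp
  also have "\<dots> \<le> the (U (i, j))" using syt_col_mono[OF assms(1,2,3)] .
  finally show ?thesis .
qed

lemma subtab_Some: "subtab k U c = Some v \<longleftrightarrow> U c = Some v \<and> v \<le> k"
  unfolding subtab_def by (cases "U c") auto

lemma subtab_None: "subtab k U c = None \<longleftrightarrow> (U c = None \<or> the (U c) > k)"
  unfolding subtab_def by (cases "U c") auto

lemma dom_subtab: "dom (subtab k U) = {c \<in> dom U. the (U c) \<le> k}"
  unfolding subtab_def by (auto split: option.splits if_splits)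

lemma subtab_the: "c \<in> dom (subtab k U) \<Longrightarrow> the (subtab k U c) = the (U c)"
  unfolding subtab_def by (auto split: option.splits if_splits)

lemma subtab_subtab: "a \<le> b \<Longrightarrow> subtab a (subtab b U) = subtab a U"
  unfolding subtab_def by (rule ext) (auto split: option.splits)

lemma subtab_full: assumes "is_syt n U" shows "subtab n U = U"
proof (rule ext)
  fix c show "subtab n U c = U c"
    using syt_val[OF assms, of c] unfolding subtab_def by (cases "U c") auto
qed

lemma subtab_zero: assumes "is_syt n U" shows "subtab 0 U = Map.empty"
proof (rule ext)
  fix c show "subtab 0 U c = None"
    using syt_val[OF assms, of c] unfolding subtab_def by (cases "U c") auto
qed

lemma syt_subtab: assumes U: "is_syt n U" and kn: "k \<le> n" shows "is_syt k (subtab k U)"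
proof -
  let ?S = "subtab k U"
  have dS: "dom ?S = {c \<in> dom U. the (U c) \<le> k}" by (rule dom_subtab)
  have fin: "finite (dom ?S)"
    using ferrers_finite[OF syt_ferrers[OF U]] dS by simp
  have fer: "ferrers (dom ?S)" unfolding ferrers_def
  proof (intro conjI allI impI)
    show "finite (dom ?S)" by (rule fin)
  next
    fix i j i' j' assume a: "(i, j) \<in> dom ?S" "i' \<le> i" "j' \<le> j"
    have ij: "(i, j) \<in> dom U" "the (U (i, j)) \<le> k" using a(1) dS by auto
    have "(i', j') \<in> dom U" using ferrers_down[OF syt_ferrers[OF U] ij(1) a(2,3)] .
    moreover have "the (U (i', j')) \<le> the (U (i, j))" using syt_mono[OF U ij(1) a(2,3)] .
    ultimately show "(i', j') \<in> dom ?S" using ij(2) dS by simp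
  qed
  have bij: "bij_betw (\<lambda>c. the (?S c)) (dom ?S) {1..k}"
    unfolding bij_betw_def
  proof (intro conjI)
    have "inj_on (\<lambda>c. the (U c)) (dom U)" using syt_bij[OF U] bij_betw_imp_inj_on by blast
    then have "inj_on (\<lambda>c. the (U c)) (dom ?S)" using dS by (auto intro: inj_on_subset)
    then show "inj_on (\<lambda>c. the (?S c)) (dom ?S)"
      by (rule inj_on_cong[THEN iffD1, rotated]) (simp add: subtab_the)
    show "(\<lambda>c. the (?S c)) ` dom ?S = {1..k}"
    proof
      show "(\<lambda>c. the (?S c)) ` dom ?S \<subseteq> {1..k}"
      proof
        fix v assume "v \<in> (\<lambda>c. the (?S c)) ` dom ?S"
        then obtain c where c: "c \<in> dom ?S" "v = the (?S c)" by blast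
        then obtain w where w: "?S c = Some w" by blast
        then have "U c = Some w \<and> w \<le> k" using subtab_Some by blast
        then have "U c = Some w" "w \<le> k" by simp_all
        moreover have "1 \<le> w" using syt_val[OF U \<open>U c = Some w\<close>] by simp
        ultimately show "v \<in> {1..k}" using c(2) w by simp
      qed
      show "{1..k} \<subseteq> (\<lambda>c. the (?S c)) ` dom ?S"
      proof
        fix v assume v: "v \<in> {1..k}"
        then obtain c where c: "U c = Some v" using syt_surj[OF U, of v] kn by force
        then have "?S c = Some v" using v subtab_Some by simp
        then show "v \<in> (\<lambda>c. the (?S c)) ` dom ?S" by force
      qed
    qed
  qed
  have card: "card (dom ?S) = k" using bij_betw_same_card[OF bij] by simp
  have row: "the (?S (i, j)) < the (?S (i, Suc j))" if "(i, Suc j) \<in> dom ?S" for i j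
  proof -
    have "(i, j) \<in> dom ?S" using ferrers_down[OF fer that, of i j] by simp
    then show ?thesis using that syt_row[OF U, of i j] dS subtab_the by simp
  qed
  have col: "the (?S (i, j)) < the (?S (Suc i, j))" if "(Suc i, j) \<in> dom ?S" for i j
  proof -
    have "(i, j) \<in> dom ?S" using ferrers_down[OF fer that, of i j] by simp
    then show ?thesis using that syt_col[OF U, of i j] dS subtab_the by simp
  qed
  show ?thesis unfolding is_syt_def using fer card bij row col by blast
qed

lemma subtab_top: assumes U: "is_syt (Suc k) U" and c: "U c = Some (Suc k)"
  shows "subtab k U = U(c := None)"
proof (rule ext)
  fix x show "subtab k U x = (U(c := None)) x"
  proof (cases "x = c")
    case True then show ?thesis using c unfolding subtab_def by simp
  next
    case False
    show ?thesis
    proof (cases "U x")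
      case None then show ?thesis using False unfolding subtab_def by simp
    next
      case (Some v)
      have "v \<noteq> Suc k" using syt_inj[OF U, of x v c] Some c False by auto
      moreover have "v \<le> Suc k" using syt_val[OF U Some] by simp
      ultimately show ?thesis using False Some unfolding subtab_def by simp
    qed
  qed
qed

lemma syt_add: assumes T: "is_syt k T" and c: "c \<in> addc (dom T)"
  shows "is_syt (Suc k) (T(c \<mapsto> Suc k))"
proof -
  let ?T = "T(c \<mapsto> Suc k)"
  have cn: "c \<notin> dom T" using addc_notin[OF c] .
  have dT: "dom ?T = insert c (dom T)" by simp
  have fer: "ferrers (dom ?T)" using addc_ferrers[OF c] dT by simp
  have finT: "finite (dom T)" using ferrers_finite[OF syt_ferrers[OF T]] .
  have card: "card (dom ?T) = Suc k" using dT cn finT syt_card[OF T] by simp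
  have valT: "the (T x) \<le> k" if "x \<in> dom T" for x
    using that syt_val[OF T, of x] by auto
  have bij: "bij_betw (\<lambda>x. the (?T x)) (dom ?T) {1..Suc k}"
    unfolding bij_betw_def
  proof (intro conjI)
    have injT: "inj_on (\<lambda>c. the (T c)) (dom T)" using syt_bij[OF T] bij_betw_imp_inj_on by blast
    show "inj_on (\<lambda>x. the (?T x)) (dom ?T)"
    proof (rule inj_onI)
      fix x y assume xy: "x \<in> dom ?T" "y \<in> dom ?T" "the (?T x) = the (?T y)"
      show "x = y"
      proof (cases "x = c"; cases "y = c")
        assume "x = c" "y \<noteq> c"
        then have "y \<in> dom T" using xy by simp
        then show ?thesis using xy valT[of y] \<open>x = c\<close> \<open>y \<noteq> c\<close> by simp
      next
        assume "x \<noteq> c" "y = c"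
        then have "x \<in> dom T" using xy by simp
        then show ?thesis using xy valT[of x] \<open>x \<noteq> c\<close> \<open>y = c\<close> by simp
      next
        assume "x \<noteq> c" "y \<noteq> c"
        then show ?thesis using xy injT inj_onD[OF injT, of x y] by simp
      qed simp
    qed
    have imT: "(\<lambda>c. the (T c)) ` dom T = {1..k}" using syt_bij[OF T] by (simp add: bij_betw_def)
    have "(\<lambda>x. the (?T x)) ` dom ?T = insert (Suc k) ((\<lambda>x. the (?T x)) ` dom T)" using dT by simp
    also have "(\<lambda>x. the (?T x)) ` dom T = (\<lambda>c. the (T c)) ` dom T"
      by (rule image_cong[OF refl]) (use cn in auto)
    finally have e: "(\<lambda>x. the (?T x)) ` dom ?T = insert (Suc k) {1..k}" unfolding imT .
    have "{1..Suc k} = insert (Suc k) {1..k}" by (rule atLeastAtMostSuc_conv) simp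
    then show "(\<lambda>x. the (?T x)) ` dom ?T = {1..Suc k}" using e by simp
  qed
  have below: "x \<in> dom T" if "x \<in> dom ?T" "x \<noteq> c" for x using that by simp
  have row: "the (?T (i, j)) < the (?T (i, Suc j))" if "(i, Suc j) \<in> dom ?T" for i j
  proof -
    have ij: "(i, j) \<in> dom ?T" using ferrers_down[OF fer that, of i j] by simp
    show ?thesis
    proof (cases "(i, Suc j) = c")
      case True
      then have "(i, j) \<noteq> c" by auto
      then have "(i, j) \<in> dom T" using ij by simp
      then show ?thesis using True valT[of "(i,j)"] \<open>(i, j) \<noteq> c\<close> by simp
    next
      case False
      then have d1: "(i, Suc j) \<in> dom T" using that by simp
      then have "(i, j) \<in> dom T" using ferrers_down[OF syt_ferrers[OF T] d1, of i j] by simp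
      then have "(i, j) \<noteq> c" using cn by auto
      then show ?thesis using False syt_row[OF T d1] by simp
    qed
  qed
  have col: "the (?T (i, j)) < the (?T (Suc i, j))" if "(Suc i, j) \<in> dom ?T" for i j
  proof -
    have ij: "(i, j) \<in> dom ?T" using ferrers_down[OF fer that, of i j] by simp
    show ?thesis
    proof (cases "(Suc i, j) = c")
      case True
      then have "(i, j) \<noteq> c" by auto
      then have "(i, j) \<in> dom T" using ij by simp
      then show ?thesis using True valT[of "(i,j)"] \<open>(i, j) \<noteq> c\<close> by simp
    next
      case False
      then have d1: "(Suc i, j) \<in> dom T" using that by simp
      then have "(i, j) \<in> dom T" using ferrers_down[OF syt_ferrers[OF T] d1, of i j] by simp
      then have "(i, j) \<noteq> c" using cn by auto
      then show ?thesis using False syt_col[OF T d1] by simp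
    qed
  qed
  show ?thesis unfolding is_syt_def using fer card bij row col by blast
qed

lemma subtab_add: assumes T: "is_syt k T" and cn: "c \<notin> dom T"
  shows "subtab k (T(c \<mapsto> Suc k)) = T"
proof (rule ext)
  fix x show "subtab k (T(c \<mapsto> Suc k)) x = T x"
  proof (cases "x = c")
    case True
    have "T c = None" using cn by (simp add: domIff)
    then show ?thesis using True unfolding subtab_def by simp
  next
    case False
    then show ?thesis using syt_val[OF T, of x] unfolding subtab_def by (cases "T x") auto
  qed
qed

lemma syt_cells: assumes U: "is_syt n U" and c: "(i, j) \<in> dom U" shows "i < n \<and> j < n"
proof -
  have fer: "ferrers (dom U)" using syt_ferrers[OF U] .
  have fin: "finite (dom U)" using ferrers_finite[OF fer] .
  have "(\<lambda>a. (a, j)) ` {..i} \<subseteq> dom U" using ferrers_down[OF fer c] by auto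
  then have "card ((\<lambda>a. (a, j)) ` {..i}) \<le> n" using card_mono[OF fin] syt_card[OF U] by metis
  moreover have "card ((\<lambda>a. (a, j)) ` {..i}) = Suc i" by (subst card_image) (auto intro: inj_onI)
  moreover have "(\<lambda>b. (i, b)) ` {..j} \<subseteq> dom U" using ferrers_down[OF fer c] by auto
  then have "card ((\<lambda>b. (i, b)) ` {..j}) \<le> n" using card_mono[OF fin] syt_card[OF U] by metis
  moreover have "card ((\<lambda>b. (i, b)) ` {..j}) = Suc j" by (subst card_image) (auto intro: inj_onI)
  ultimately show ?thesis by simp
qed

lemma finite_syt: "finite {U. is_syt n U}"
proof -
  let ?A = "{..<n} \<times> {..<n}"
  have "{U. is_syt n U} \<subseteq> (\<Union>X\<in>Pow ?A. {m. dom m = X \<and> ran m \<subseteq> {1..n}})"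
  proof
    fix U assume "U \<in> {U. is_syt n U}"
    then have U: "is_syt n U" by simp
    have "dom U \<subseteq> ?A" using syt_cells[OF U] by auto
    moreover have "ran U \<subseteq> {1..n}" using syt_val[OF U] by (auto simp: ran_def)
    ultimately show "U \<in> (\<Union>X\<in>Pow ?A. {m. dom m = X \<and> ran m \<subseteq> {1..n}})" by blast
  qed
  moreover have "finite (\<Union>X\<in>Pow ?A. {m. dom m = X \<and> ran m \<subseteq> {1..n}})"
  proof (rule finite_UN_I)
    show "finite (Pow ?A)" by simp
    fix X assume "X \<in> Pow ?A"
    then have "finite X" by (auto intro: finite_subset)
    then show "finite {m. dom m = X \<and> ran m \<subseteq> {1..n}}"
      by (rule finite_set_of_finite_maps) simp
  qed
  ultimately show ?thesis by (rule finite_subset)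
qed


lemma upd_eq_cell: assumes "T(c \<mapsto> v) = T'(c' \<mapsto> v)" "T c' = None" shows "c = c'"
proof (rule ccontr)
  assume "c \<noteq> c'"
  then have "(T(c \<mapsto> v)) c' = T c'" by simp
  also have "\<dots> = None" by (rule assms(2))
  finally show False using assms(1) by simp
qed

lemma ext_count:
  assumes "is_syt k T"
  shows "card {U. is_syt (k + L) U \<and> subtab k U = T} = Z L (dom T)"
  using assms
proof (induction L arbitrary: k T)
  case 0
  have "{U. is_syt (k + 0) U \<and> subtab k U = T} = {T}"
    using subtab_full[of k] 0 by auto
  then show ?case by simp
next
  case (Suc L)
  note T = Suc.prems
  let ?S = "\<lambda>c. {U. is_syt (Suc k + L) U \<and> subtab (Suc k) U = T(c \<mapsto> Suc k)}"
  have eq: "{U. is_syt (k + Suc L) U \<and> subtab k U = T} = (\<Union>c\<in>addc (dom T). ?S c)"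
  proof
    show "{U. is_syt (k + Suc L) U \<and> subtab k U = T} \<subseteq> (\<Union>c\<in>addc (dom T). ?S c)"
    proof
      fix U assume "U \<in> {U. is_syt (k + Suc L) U \<and> subtab k U = T}"
      then have U: "is_syt (k + Suc L) U" and sU: "subtab k U = T" by auto
      let ?T' = "subtab (Suc k) U"
      have T': "is_syt (Suc k) ?T'" using syt_subtab[OF U] by simp
      obtain c where c: "U c = Some (Suc k)" using syt_surj[OF U, of "Suc k"] by auto
      have cT': "?T' c = Some (Suc k)" using c subtab_Some by simp
      have "subtab k ?T' = ?T'(c := None)" by (rule subtab_top[OF T' cT'])
      moreover have "subtab k ?T' = T" using subtab_subtab[of k "Suc k" U] sU by simp
      ultimately have TT: "T = ?T'(c := None)" by simp
      have Tc: "T c = None" using TT by simp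
      have e2: "?T' = T(c \<mapsto> Suc k)"
      proof (rule ext)
        fix x show "?T' x = (T(c \<mapsto> Suc k)) x"
          using TT cT' by (cases "x = c") auto
      qed
      have "ferrers (dom ?T')" using syt_ferrers[OF T'] .
      then have "ferrers (insert c (dom T))" using e2 by simp
      then have ca: "c \<in> addc (dom T)" using Tc by (simp add: addc_def domIff)
      have "U \<in> ?S c" using U e2 by simp
      then show "U \<in> (\<Union>c\<in>addc (dom T). ?S c)" using ca by blast
    qed
  next
    show "(\<Union>c\<in>addc (dom T). ?S c) \<subseteq> {U. is_syt (k + Suc L) U \<and> subtab k U = T}"
    proof
      fix U assume "U \<in> (\<Union>c\<in>addc (dom T). ?S c)"
      then obtain c where ca: "c \<in> addc (dom T)" and U: "is_syt (Suc k + L) U"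
        and sU: "subtab (Suc k) U = T(c \<mapsto> Suc k)" by blast
      have "subtab k U = subtab k (subtab (Suc k) U)" using subtab_subtab[of k "Suc k" U] by simp
      also have "\<dots> = T" using sU subtab_add[OF T addc_notin[OF ca]] by simp
      finally show "U \<in> {U. is_syt (k + Suc L) U \<and> subtab k U = T}" using U by simp
    qed
  qed
  have fin: "finite (addc (dom T))" using finite_addc[OF syt_ferrers[OF T]] .
  have finS: "finite (?S c)" for c
    by (rule finite_subset[OF _ finite_syt[of "Suc k + L"]]) auto
  have disj: "?S c \<inter> ?S c' = {}" if "c \<in> addc (dom T)" "c' \<in> addc (dom T)" "c \<noteq> c'" for c c'
  proof (rule ccontr)
    assume "?S c \<inter> ?S c' \<noteq> {}"
    then obtain U where "U \<in> ?S c" "U \<in> ?S c'" by blast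
    then have "T(c \<mapsto> Suc k) = T(c' \<mapsto> Suc k)" by simp
    moreover have "T c' = None" using addc_notin[OF that(2)] by (simp add: domIff)
    ultimately have "c = c'" by (rule upd_eq_cell)
    then show False using that(3) by simp
  qed
  have "card {U. is_syt (k + Suc L) U \<and> subtab k U = T} = (\<Sum>c\<in>addc (dom T). card (?S c))"
    unfolding eq by (rule card_UN_disjoint[OF fin]) (use finS disj in auto)
  also have "\<dots> = (\<Sum>c\<in>addc (dom T). Z L (insert c (dom T)))"
  proof (rule sum.cong[OF refl])
    fix c assume ca: "c \<in> addc (dom T)"
    have "card (?S c) = Z L (dom (T(c \<mapsto> Suc k)))"
      by (rule Suc.IH[OF syt_add[OF T ca]])
    then show "card (?S c) = Z L (insert c (dom T))" by simp
  qed
  also have "\<dots> = Z (Suc L) (dom T)" by simp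
  finally show ?case .
qed

lemma shape_count:
  assumes "ferrers D"
  shows "card (syt_shape D) = W (card D) D"
proof -
  have "\<And>D. ferrers D \<Longrightarrow> card D = m \<Longrightarrow> card (syt_shape D) = W m D" for m
  proof (induction m)
    case 0
    then have D: "D = {}" using ferrers_finite by auto
    have e: "syt_shape D = {Map.empty}"
    proof
      show "syt_shape D \<subseteq> {Map.empty}" unfolding syt_shape_def D by auto
      have "is_syt 0 Map.empty" unfolding is_syt_def ferrers_def by (simp add: bij_betw_def)
      then show "{Map.empty} \<subseteq> syt_shape D" unfolding syt_shape_def D by simp
    qed
    show ?case unfolding e by simp
  next
    case (Suc m)
    note D = Suc.prems(1) and cD = Suc.prems(2)
    let ?I = "\<lambda>c. (\<lambda>T'. T'(c \<mapsto> Suc m)) ` syt_shape (D - {c})"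
    have eq: "syt_shape D = (\<Union>c\<in>remc D. ?I c)"
    proof
      show "syt_shape D \<subseteq> (\<Union>c\<in>remc D. ?I c)"
      proof
        fix U assume "U \<in> syt_shape D"
        then have U: "is_syt (Suc m) U" and dU: "dom U = D" unfolding syt_shape_def using cD by auto
        obtain c where c: "U c = Some (Suc m)" using syt_surj[OF U, of "Suc m"] by auto
        let ?T = "subtab m U"
        have T: "is_syt m ?T" using syt_subtab[OF U] by simp
        have e: "?T = U(c := None)" by (rule subtab_top[OF U c])
        have cD': "c \<in> D" using c dU by blast
        have dT: "dom ?T = D - {c}" using e dU by simp
        have cr: "c \<in> remc D" using syt_ferrers[OF T] dT cD' by (simp add: remc_def)
        have "card (D - {c}) = m" using cD cD' by simp
        then have "?T \<in> syt_shape (D - {c})" using T dT unfolding syt_shape_def by simp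
        moreover have "U = ?T(c \<mapsto> Suc m)" using e c by (auto simp: fun_eq_iff)
        ultimately show "U \<in> (\<Union>c\<in>remc D. ?I c)" using cr by blast
      qed
    next
      show "(\<Union>c\<in>remc D. ?I c) \<subseteq> syt_shape D"
      proof
        fix U assume "U \<in> (\<Union>c\<in>remc D. ?I c)"
        then obtain c T' where cr: "c \<in> remc D" and T'm: "T' \<in> syt_shape (D - {c})"
          and U: "U = T'(c \<mapsto> Suc m)" by blast
        have cD': "c \<in> D" using remc_in[OF cr] .
        have cm: "card (D - {c}) = m" using cD cD' by simp
        have T': "is_syt m T'" and dT': "dom T' = D - {c}" using T'm cm unfolding syt_shape_def by auto
        have ca: "c \<in> addc (dom T')" using addc_rem[OF D cr] dT' by simp
        have "is_syt (Suc m) U" using syt_add[OF T' ca] U by simp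
        moreover have "dom U = D" using U dT' cD' by auto
        ultimately show "U \<in> syt_shape D" unfolding syt_shape_def using cD by simp
      qed
    qed
    have fin: "finite (remc D)" using finite_remc[OF D] .
    have finI: "finite (?I c)" for c
    proof -
      have "syt_shape (D - {c}) \<subseteq> {U. is_syt (card (D - {c})) U}" unfolding syt_shape_def by auto
      then have "finite (syt_shape (D - {c}))" using finite_syt finite_subset by blast
      then show ?thesis by simp
    qed
    have disj: "?I c \<inter> ?I c' = {}" if "c \<in> remc D" "c' \<in> remc D" "c \<noteq> c'" for c c'
    proof (rule ccontr)
      assume "?I c \<inter> ?I c' \<noteq> {}"
      then obtain T1 T2 where T1: "T1 \<in> syt_shape (D - {c})" and T2: "T2 \<in> syt_shape (D - {c'})"
        and e: "T1(c \<mapsto> Suc m) = T2(c' \<mapsto> Suc m)" by blast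
      have cm: "card (D - {c'}) = m" using cD remc_in[OF that(2)] by simp
      have T2s: "is_syt m T2" and dT2: "dom T2 = D - {c'}" using T2 cm unfolding syt_shape_def by auto
      have "T2 c = Some (Suc m)" using e that(3) by (metis fun_upd_same fun_upd_other)
      then have "Suc m \<le> m" using syt_val[OF T2s, of c "Suc m"] by simp
      then show False by simp
    qed
    have inj: "inj_on (\<lambda>T'. T'(c \<mapsto> Suc m)) (syt_shape (D - {c}))" for c
    proof (rule inj_onI)
      fix T1 T2 assume T1: "T1 \<in> syt_shape (D - {c})" and T2: "T2 \<in> syt_shape (D - {c})"
        and e: "T1(c \<mapsto> Suc m) = T2(c \<mapsto> Suc m)"
      have "T1 c = None" "T2 c = None" using T1 T2 unfolding syt_shape_def by auto
      then have "T1 = (T1(c \<mapsto> Suc m))(c := None)" "T2 = (T2(c \<mapsto> Suc m))(c := None)"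
        by (auto simp: fun_eq_iff)
      then show "T1 = T2" using e by metis
    qed
    have "card (syt_shape D) = (\<Sum>c\<in>remc D. card (?I c))"
      unfolding eq by (rule card_UN_disjoint[OF fin]) (use finI disj in auto)
    also have "\<dots> = (\<Sum>c\<in>remc D. W m (D - {c}))"
    proof (rule sum.cong[OF refl])
      fix c assume cr: "c \<in> remc D"
      have "card (?I c) = card (syt_shape (D - {c}))" by (rule card_image[OF inj])
      also have "\<dots> = W m (D - {c})"
        using Suc.IH[OF remc_ferrers[OF cr]] cD remc_in[OF cr] by simp
      finally show "card (?I c) = W m (D - {c})" .
    qed
    also have "\<dots> = W (Suc m) D" by simp
    finally show ?case .
  qed
  then show ?thesis using assms by blast
qed

lemma card_syt_set: "card (syt_set n) = tt n"
proof -
  have e0: "is_syt 0 Map.empty" unfolding is_syt_def ferrers_def by (simp add: bij_betw_def)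
  have "syt_set n = {U. is_syt (0 + n) U \<and> subtab 0 U = Map.empty}"
    unfolding syt_set_def using subtab_zero by auto
  then have "card (syt_set n) = Z n (dom Map.empty)" using ext_count[OF e0, of n] by simp
  then show ?thesis using Z_empty by simp
qed

lemma N_count_eq:
  assumes T: "is_syt k T"
  shows "N_count (k + L) T = Z L (dom T)"
proof -
  have "{U \<in> syt_set (k + L). contains U T} = {U. is_syt (k + L) U \<and> subtab k U = T}"
    unfolding syt_set_def contains_def using syt_card[OF T] syt_card by auto
  then show ?thesis unfolding N_count_def using ext_count[OF T] by simp
qed


definition t :: "nat \<Rightarrow> real" where "t n = real (tt n)"
definition r :: "nat \<Rightarrow> real" where "r n = t (Suc n) / t n"

lemma tt_pos: "tt n \<ge> 1"
  by (induction n rule: tt.induct) auto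

lemma t_pos: "t n > 0"
  unfolding t_def using tt_pos[of n] by simp

lemma tt_mono: "n \<le> m \<Longrightarrow> tt n \<le> tt m"
  by (rule lift_Suc_mono_le[of tt]) (simp_all add: tt_rec)

lemma t_mono: "n \<le> m \<Longrightarrow> t n \<le> t m"
  unfolding t_def using tt_mono by simp

lemma t_rec2: "t (Suc (Suc n)) = t (Suc n) + real (Suc n) * t n"
  unfolding t_def by (simp add: algebra_simps)

lemma r_pos: "r n > 0"
  unfolding r_def using t_pos by simp

lemma r_rec: "r (Suc n) = 1 + real (Suc n) / r n"
proof -
  have "r (Suc n) = (t (Suc n) + real (Suc n) * t n) / t (Suc n)"
    unfolding r_def t_rec2 by simp
  also have "\<dots> = 1 + real (Suc n) / r n"
    unfolding r_def using t_pos[of n] t_pos[of "Suc n"] by (simp add: field_simps)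
  finally show ?thesis .
qed

lemma step_ineq:
  fixes s n :: real
  assumes s1: "1 \<le> s" and u: "(s - 1)^2 \<le> n" and l: "n + 1 \<le> s^2" and n0: "0 \<le> n"
  shows "n + 2 \<le> (1 + (n + 1) / s)^2" "(1 + (n + 1) / s - 1)^2 \<le> n + 1"
proof -
  have sp: "s > 0" using s1 by simp
  have id: "(s + n + 1)^2 - (n + 2) * s^2 = (n + 1) * (n + 2 - (s - 1)^2)"
    by (simp add: power2_eq_square algebra_simps)
  have "(n + 1) * (n + 2 - (s - 1)^2) \<ge> 0" using u n0 by simp
  then have "(n + 2) * s^2 \<le> (s + n + 1)^2" using id by simp
  moreover have "(1 + (n + 1) / s)^2 = (s + n + 1)^2 / s^2"
    using sp by (simp add: field_simps power2_eq_square)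
  ultimately show "n + 2 \<le> (1 + (n + 1) / s)^2"
    using sp by (simp add: field_simps)
  have "(1 + (n + 1) / s - 1)^2 = (n + 1)^2 / s^2" by (simp add: power_divide)
  also have "\<dots> \<le> (n + 1)^2 / (n + 1)"
    using l n0 by (intro divide_left_mono) (auto simp: power2_eq_square)
  also have "\<dots> = n + 1" using n0 by (simp add: power2_eq_square)
  finally show "(1 + (n + 1) / s - 1)^2 \<le> n + 1" .
qed

lemma r_bounds: "1 \<le> r n \<and> real n + 1 \<le> (r n)^2 \<and> (r n - 1)^2 \<le> real n"
proof (induction n)
  case 0
  have "r 0 = 1" unfolding r_def t_def by simp
  then show ?case by simp
next
  case (Suc n)
  have s1: "1 \<le> r n" and u: "(r n - 1)^2 \<le> real n" and l: "real n + 1 \<le> (r n)^2"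
    using Suc.IH by auto
  have e: "r (Suc n) = 1 + (real n + 1) / r n" using r_rec[of n] by simp
  have a: "real n + 2 \<le> (r (Suc n))^2" "(r (Suc n) - 1)^2 \<le> real n + 1"
    using step_ineq[OF s1 u l] unfolding e by simp_all
  have "1 \<le> r (Suc n)" unfolding e using r_pos[of n] by simp
  then show ?case using a by simp
qed

lemma r_lower: "sqrt (real n + 1) \<le> r n"
proof -
  have "sqrt (real n + 1) \<le> sqrt ((r n)^2)" using r_bounds[of n] by (intro real_sqrt_le_mono) simp
  also have "\<dots> = r n" using r_pos[of n] by simp
  finally show ?thesis .
qed

lemma r_upper: "r n \<le> 1 + sqrt (real n)"
proof -
  have "(r n - 1)^2 \<le> real n" "r n - 1 \<ge> 0" using r_bounds[of n] by auto
  then have "r n - 1 \<le> sqrt (real n)" using real_le_rsqrt by blast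
  then show ?thesis by simp
qed

lemma r_at_top: "filterlim (\<lambda>m. r (m + j)) at_top sequentially"
proof (rule filterlim_at_top_mono)
  show "filterlim (\<lambda>n. sqrt (real n + 1)) at_top sequentially" by real_asymp
  show "\<forall>\<^sub>F x in sequentially. sqrt (real x + 1) \<le> r (x + j)"
  proof (rule always_eventually, rule allI)
    fix x
    have "sqrt (real x + 1) \<le> sqrt (real (x + j) + 1)" by simp
    also have "\<dots> \<le> r (x + j)" by (rule r_lower)
    finally show "sqrt (real x + 1) \<le> r (x + j)" .
  qed
qed

lemma ratio_shift: "(\<lambda>n. (real n + c) / real n) \<longlonglongrightarrow> 1"
proof -
  have "(\<lambda>n. 1 + c / real n) \<longlonglongrightarrow> 1 + 0"
    by (intro tendsto_add tendsto_const lim_const_over_n)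
  moreover have "\<forall>\<^sub>F n in sequentially. 1 + c / real n = (real n + c) / real n"
    using eventually_gt_at_top[of 0] by eventually_elim (simp add: field_simps)
  ultimately show ?thesis using Lim_transform_eventually by fastforce
qed

lemma R3: "(\<lambda>n. t (n + 2) / (t n * real n)) \<longlonglongrightarrow> 1"
proof -
  have rn: "(\<lambda>n. r n / real n) \<longlonglongrightarrow> 0"
  proof (rule tendsto_sandwich[of "\<lambda>n. 0" _ _ "\<lambda>n. (1 + sqrt (real n)) / real n"])
    show "\<forall>\<^sub>F n in sequentially. 0 \<le> r n / real n" using r_pos by (simp add: less_imp_le)
    show "\<forall>\<^sub>F n in sequentially. r n / real n \<le> (1 + sqrt (real n)) / real n"
      by (rule always_eventually, rule allI, rule divide_right_mono[OF r_upper]) simp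
    show "(\<lambda>n. 0) \<longlonglongrightarrow> (0::real)" by simp
    show "(\<lambda>n. (1 + sqrt (real n)) / real n) \<longlonglongrightarrow> 0" by real_asymp
  qed
  have "(\<lambda>n. r n / real n + (real n + 1) / real n) \<longlonglongrightarrow> 0 + 1"
    by (intro tendsto_add rn ratio_shift)
  moreover have "\<forall>\<^sub>F n in sequentially. r n / real n + (real n + 1) / real n = t (n + 2) / (t n * real n)"
  proof (rule eventually_mono[OF eventually_gt_at_top[of 0]])
    fix n :: nat assume n: "n > 0"
    have "t (n + 2) = t (Suc n) + real (Suc n) * t n" using t_rec2[of n] by (simp add: numeral_2_eq_2)
    then show "r n / real n + (real n + 1) / real n = t (n + 2) / (t n * real n)"
      unfolding r_def using n t_pos[of n] by (simp add: field_simps)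
  qed
  ultimately show ?thesis using Lim_transform_eventually by fastforce
qed

lemma Q_lim: "(\<lambda>n. t (n + 2 * j) / (t n * real n ^ j)) \<longlonglongrightarrow> 1"
proof (induction j)
  case 0
  show ?case using t_pos by (simp add: less_imp_neq[symmetric])
next
  case (Suc j)
  have a: "(\<lambda>n. t ((n + 2) + 2 * j) / (t (n + 2) * real (n + 2) ^ j)) \<longlonglongrightarrow> 1"
    using LIMSEQ_ignore_initial_segment[OF Suc.IH, of 2] by simp
  have c: "(\<lambda>n. ((real n + 2) / real n) ^ j) \<longlonglongrightarrow> 1"
    using tendsto_power[OF ratio_shift[of 2], of j] by simp
  have "(\<lambda>n. t ((n + 2) + 2 * j) / (t (n + 2) * real (n + 2) ^ j) * (t (n + 2) / (t n * real n))
          * ((real n + 2) / real n) ^ j) \<longlonglongrightarrow> 1 * 1 * 1"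
    by (intro tendsto_mult a R3 c)
  moreover have "\<forall>\<^sub>F n in sequentially. t ((n + 2) + 2 * j) / (t (n + 2) * real (n + 2) ^ j) * (t (n + 2) / (t n * real n))
          * ((real n + 2) / real n) ^ j = t (n + 2 * Suc j) / (t n * real n ^ Suc j)"
  proof (rule eventually_mono[OF eventually_gt_at_top[of 0]])
    fix n :: nat assume n: "n > 0"
    have e: "n + 2 + 2 * j = n + 2 * Suc j" by simp
    have p: "real n ^ j > 0" using n by simp
    have q: "(real n + 2) ^ j > 0" by simp
    show "t ((n + 2) + 2 * j) / (t (n + 2) * real (n + 2) ^ j) * (t (n + 2) / (t n * real n))
          * ((real n + 2) / real n) ^ j = t (n + 2 * Suc j) / (t n * real n ^ Suc j)"
      unfolding e using n p q t_pos[of n] t_pos[of "n+2"]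
      by (simp add: field_simps power_divide)
  qed
  ultimately show ?case using Lim_transform_eventually by fastforce
qed

lemma aux_frac:
  fixes a b :: real and j m :: nat
  assumes "m > 0" "real (Suc (m + j)) * a = b * real (Suc j)"
  shows "a / real m ^ k * ((real m + (real j + 1)) / real m) / real (Suc j) = b / real m ^ Suc k"
proof -
  have "a / real m ^ k * ((real m + (real j + 1)) / real m) / real (Suc j) = (real (Suc (m + j)) * a) / (real m ^ Suc k * real (Suc j))"
    using assms(1) by (simp add: field_simps)
  also have "\<dots> = (b * real (Suc j)) / (real m ^ Suc k * real (Suc j))" unfolding assms(2) ..
  also have "\<dots> = b / real m ^ Suc k" by (rule mult_divide_mult_cancel_right) simp
  finally show ?thesis .
qed

lemma P_lim: "(\<lambda>n. real ((n + j) choose j) / real n ^ j) \<longlonglongrightarrow> 1 / fact j"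
proof (induction j)
  case 0 then show ?case by simp
next
  case (Suc j)
  have lim1: "(\<lambda>n. real ((n + j) choose j) / real n ^ j * ((real n + (real j + 1)) / real n) / real (Suc j))
        \<longlonglongrightarrow> 1 / fact j * 1 / real (Suc j)"
    by (intro tendsto_divide tendsto_mult Suc.IH ratio_shift tendsto_const) simp
  have ev: "\<forall>\<^sub>F n in sequentially. real ((n + j) choose j) / real n ^ j * ((real n + (real j + 1)) / real n) / real (Suc j)
      = real ((n + Suc j) choose Suc j) / real n ^ Suc j"
  proof (rule eventually_mono[OF eventually_gt_at_top[of 0]])
    fix n :: nat assume n: "n > 0"
    have b0: "Suc (n + j) * ((n + j) choose j) = ((n + Suc j) choose Suc j) * Suc j"
      using Suc_times_binomial_eq[of "n + j" j] by simp
    have b: "real (Suc (n + j)) * real ((n + j) choose j) = real ((n + Suc j) choose Suc j) * real (Suc j)"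
      using arg_cong[OF b0, of real] by (simp only: of_nat_mult)
    show "real ((n + j) choose j) / real n ^ j * ((real n + (real j + 1)) / real n) / real (Suc j)
      = real ((n + Suc j) choose Suc j) / real n ^ Suc j"
      by (rule aux_frac[OF n b])
  qed
  have eqv: "1 / fact j * 1 / real (Suc j) = (1 / fact (Suc j) :: real)" by simp
  show ?case using Lim_transform_eventually[OF lim1[unfolded eqv] ev] .
qed

lemma A_lim: "(\<lambda>m. real (m choose j) * t (m - j) / t (m + j)) \<longlonglongrightarrow> 1 / fact j"
proof (rule LIMSEQ_offset[of _ j])
  have "(\<lambda>n. (real ((n + j) choose j) / real n ^ j) / (t (n + 2 * j) / (t n * real n ^ j)))
        \<longlonglongrightarrow> (1 / fact j) / 1"
    by (intro tendsto_divide P_lim Q_lim) simp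
  moreover have "\<forall>\<^sub>F n in sequentially. (real ((n + j) choose j) / real n ^ j) / (t (n + 2 * j) / (t n * real n ^ j))
      = real ((n + j) choose j) * t (n + j - j) / t (n + j + j)"
  proof (rule eventually_mono[OF eventually_gt_at_top[of 0]])
    fix n :: nat assume n: "n > 0"
    have e: "n + j + j = n + 2 * j" by simp
    show "(real ((n + j) choose j) / real n ^ j) / (t (n + 2 * j) / (t n * real n ^ j))
      = real ((n + j) choose j) * t (n + j - j) / t (n + j + j)"
      unfolding e using n t_pos[of n] t_pos[of "n + 2 * j"] by (simp add: field_simps)
  qed
  ultimately show "(\<lambda>n. real ((n + j) choose j) * t (n + j - j) / t (n + j + j)) \<longlonglongrightarrow> 1 / fact j"
    using Lim_transform_eventually by fastforce
qed

lemma E_lim: assumes "j < k"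
  shows "(\<lambda>m. real (m choose j) * t (m - j) / t (m + k)) \<longlonglongrightarrow> 0"
proof (rule tendsto_sandwich[of "\<lambda>n. 0" _ _ "\<lambda>m. real (m choose j) * t (m - j) / t (m + j) * inverse (r (m + j))"])
  show "\<forall>\<^sub>F n in sequentially. 0 \<le> real (n choose j) * t (n - j) / t (n + k)"
  proof (rule always_eventually, rule allI)
    fix n
    show "0 \<le> real (n choose j) * t (n - j) / t (n + k)"
      using t_pos[of "n - j"] t_pos[of "n + k"] by simp
  qed
  show "(\<lambda>n. 0) \<longlonglongrightarrow> (0::real)" by simp
  have "(\<lambda>m. real (m choose j) * t (m - j) / t (m + j) * inverse (r (m + j))) \<longlonglongrightarrow> 1 / fact j * 0"
    by (intro tendsto_mult A_lim tendsto_inverse_0_at_top r_at_top)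
  then show "(\<lambda>m. real (m choose j) * t (m - j) / t (m + j) * inverse (r (m + j))) \<longlonglongrightarrow> 0" by simp
  show "\<forall>\<^sub>F m in sequentially. real (m choose j) * t (m - j) / t (m + k)
      \<le> real (m choose j) * t (m - j) / t (m + j) * inverse (r (m + j))"
  proof (rule always_eventually, rule allI)
    fix m
    have "t (m + j) * r (m + j) = t (Suc (m + j))" unfolding r_def using t_pos[of "m + j"] by simp
    also have "\<dots> \<le> t (m + k)" using assms by (intro t_mono) simp
    finally have le: "t (m + j) * r (m + j) \<le> t (m + k)" .
    have nn: "0 \<le> real (m choose j) * t (m - j)" using t_pos[of "m - j"] by simp
    have "real (m choose j) * t (m - j) / t (m + k) \<le> real (m choose j) * t (m - j) / (t (m + j) * r (m + j))"
      using le nn t_pos[of "m + j"] r_pos[of "m + j"] t_pos[of "m + k"] by (intro divide_left_mono) auto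
    then show "real (m choose j) * t (m - j) / t (m + k)
      \<le> real (m choose j) * t (m - j) / t (m + j) * inverse (r (m + j))"
      by (simp add: field_simps)
  qed
qed


theorem theorem1:
  fixes T :: tableau and k :: nat
  assumes "is_syt k T"
  shows "(\<lambda>n. real (N_count n T) / real (card (syt_set n)))
           \<longlonglongrightarrow> real (card (syt_shape (dom T))) / fact k"
proof -
  let ?D = "dom T"
  have fer: "ferrers ?D" using syt_ferrers[OF assms] .
  have cD: "card ?D = k" using syt_card[OF assms] .
  have Wk: "card (syt_shape ?D) = W k ?D" using shape_count[OF fer] cD by simp
  let ?f = "\<lambda>L. \<Sum>j\<le>k. real (L choose j) * t (L - j) / t (L + k) * real (W j ?D)"
  have lim: "?f \<longlonglongrightarrow> (\<Sum>j\<le>k. (if j = k then 1 / fact k * real (W j ?D) else 0))"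
  proof (rule tendsto_sum)
    fix j assume "j \<in> {..k}"
    then have jk: "j \<le> k" by simp
    show "(\<lambda>L. real (L choose j) * t (L - j) / t (L + k) * real (W j ?D))
        \<longlonglongrightarrow> (if j = k then 1 / fact k * real (W j ?D) else 0)"
    proof (cases "j = k")
      case True
      then show ?thesis using tendsto_mult[OF A_lim[of k] tendsto_const[of "real (W j ?D)"]] by simp
    next
      case False
      then have "j < k" using jk by simp
      then show ?thesis using tendsto_mult[OF E_lim[of j k] tendsto_const[of "real (W j ?D)"]] False by simp
    qed
  qed
  have sumv: "(\<Sum>j\<le>k. (if j = k then 1 / fact k * real (W j ?D) else 0)) = real (card (syt_shape ?D)) / fact k"
    using Wk by simp
  have ev: "\<forall>\<^sub>F L in sequentially. ?f L = real (N_count (L + k) T) / real (card (syt_set (L + k)))"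
  proof (rule eventually_mono[OF eventually_ge_at_top[of k]])
    fix L assume kL: "k \<le> L"
    have "N_count (L + k) T = Z L ?D" using N_count_eq[OF assms, of L] by (simp add: add.commute)
    also have "\<dots> = (\<Sum>j\<le>L. B L j * W j ?D)" by (rule Z_formula[OF fer])
    also have "\<dots> = (\<Sum>j\<le>k. B L j * W j ?D)"
    proof (rule sum.mono_neutral_right)
      show "finite {..L}" by simp
      show "{..k} \<subseteq> {..L}" using kL by simp
      show "\<forall>i\<in>{..L} - {..k}. B L i * W i ?D = 0"
        using W_big[OF ferrers_finite[OF fer]] cD by auto
    qed
    finally have N: "real (N_count (L + k) T) = (\<Sum>j\<le>k. real (B L j) * real (W j ?D))" by simp
    have C: "real (card (syt_set (L + k))) = t (L + k)" unfolding card_syt_set t_def ..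
    have "real (N_count (L + k) T) / real (card (syt_set (L + k)))
        = (\<Sum>j\<le>k. real (B L j) * real (W j ?D)) / t (L + k)" unfolding N C ..
    also have "\<dots> = (\<Sum>j\<le>k. real (B L j) * real (W j ?D) / t (L + k))" by (rule sum_divide_distrib)
    also have "\<dots> = ?f L"
      by (rule sum.cong[OF refl]) (simp add: B_def t_def)
    finally show "?f L = real (N_count (L + k) T) / real (card (syt_set (L + k)))" by simp
  qed
  have "(\<lambda>L. real (N_count (L + k) T) / real (card (syt_set (L + k)))) \<longlonglongrightarrow> real (card (syt_shape ?D)) / fact k"
    using Lim_transform_eventually[OF lim[unfolded sumv] ev] .
  then show ?thesis by (rule LIMSEQ_offset)
qed

end
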